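(* Let $\Gamma^{\mathsf b}$ be a base game. There exists $\delta>0$ such that for every $\varepsilon\in(0,\delta)$, in the money-burning $\varepsilon$-game $\Gamma^{\mathsf{mb}}[\varepsilon]$ one has $\zeta(\mathbb U^\infty(S))=\{((0,a^*_{\mathrm a}),a^*_{\mathrm b})\}$, i.e., every strategy profile surviving Iterative Conditional B-Dominance leads to Ann burning nothing and the profile $(a^*_{\mathrm a},a^*_{\mathrm b})$ being played.
   Context: Base game: a two-player strategic game $\Gamma^{\mathsf b}=\langle\{\mathrm a,\mathrm b\},(A_j,v_j)_{j}\rangle$ with finite action sets $A_{\mathrm a},A_{\mathrm b}$ and utility functions $v_j:A_{\mathrm a}\times A_{\mathrm b}\to\mathbb R$, for which there exist $a^*_{\mathrm a}\in A_{\mathrm a}$, $a^*_{\mathrm b}\in A_{\mathrm b}$ with $v_{\mathrm a}(a^*_{\mathrm a},a^*_{\mathrm b})>v_{\mathrm a}(a_{\mathrm a},a_{\mathrm b})$ for every $(a_{\mathrm a},a_{\mathrm b})\neq(a^*_{\mathrm a},a^*_{\mathrm b})$, and $v_{\mathrm b}(a^*_{\mathrm a},a^*_{\mathrm b})>v_{\mathrm b}(a^*_{\mathrm a},a_{\mathrm b})$ for every $a_{\mathrm b}\neq a^*_{\mathrm b}$. Money-burning $\varepsilon$-game ($\varepsilon>0$): Ann first publicly chooses $n\in\mathbb N=\{0,1,2,\dots\}$ (burning $\varepsilon n$), then Ann and Bob simultaneously play the base game. Ann's strategies are $S_{\mathrm a}=\mathbb N\times A_{\mathrm a}$, Bob's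 are $S_{\mathrm b}=A_{\mathrm b}^{\mathbb N}$ (functions $s_{\mathrm b}:\mathbb N\to A_{\mathrm b}$), $S=S_{\mathrm a}\times S_{\mathrm b}$; the outcome of $((n,a_{\mathrm a}),s_{\mathrm b})$ is $\zeta((n,a_{\mathrm a}),s_{\mathrm b})=((n,a_{\mathrm a}),s_{\mathrm b}(n))$; Ann's preference over outcomes is represented by $((n,a_{\mathrm a}),a_{\mathrm b})\mapsto v_{\mathrm a}(a_{\mathrm a},a_{\mathrm b})-\varepsilon n$ and Bob's by $((n,a_{\mathrm a}),a_{\mathrm b})\mapsto v_{\mathrm b}(a_{\mathrm a},a_{\mathrm b})$ (write $\succsim_j,\succ_j$). Information sets: Ann has the root (reached by all profiles) and, for each $n$, the history $n$; Bob has, for each $n\in\mathbb N$, the history $n$. The profiles reaching history $n$ are $(\{n\}\times A_{\mathrm a})\times S_{\mathrm b}$. For a restriction $R=R_{\mathrm a}\times R_{\mathrm b}\subseteq S$ (nonempty) and an information set $h$ of player $i$ that strategy $s_i$ reaches, let $R^i(h)=R_i(h)\times R_{-i}(h)$ be the profiles in $R$ reaching $h$. Dominance: for $P=P_i\times P_{-i}$, $s_i\in P_i$ is weakly dominated relative to $P$ by $t_i\in P_i$ if $\zeta(t_i,s_{-i})\succsim_i\zeta(s_i,s_{-i})$ for all $s_{-i}\in P_{-i}$ with $\succ_i$ for some; B-dominated w.r.t. $P$ if for every nonempty $Q_{-i}\subseteq P_{-i}$ it is weakly dominated relative to $P_i\times Q_{-i}$ by some strategy in $P_i$. $s_i\in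 R_i$ is conditionally B-dominated w.r.t. $R$ if for some information set $h$ of $i$ reached by $s_i$ with $R^i(h)\ne\emptyset$, $s_i$ is B-dominated w.r.t. $R^i(h)$. $\mathbb U_i(R)$ is the set of $s_i\in R_i$ not conditionally B-dominated w.r.t. $R$, $\mathbb U(R)=\mathbb U_{\mathrm a}(R)\times\mathbb U_{\mathrm b}(R)$; $\mathbb U^0(S)=S$, $\mathbb U^n(S)=\mathbb U(\mathbb U^{n-1}(S))$, $\mathbb U^\infty(S)=\bigcap_{\ell\ge0}\mathbb U^\ell(S)$. *)

theory Defs
  imports Complex_Main
begin

text \<open>Money-burning epsilon-game over a two-player base game with action types 'a (Ann)
 and 'b (Bob). Ann's strategies: nat \<times> 'a; Bob's strategies: nat \<Rightarrow> 'b.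
 A restriction R = Ra \<times> Rb is represented by the pair (Ra, Rb).\<close>

type_synonym ('a,'b) restr = "(nat \<times> 'a) set \<times> (nat \<Rightarrow> 'b) set"

datatype info = Root | Hist nat

definition ann_infosets :: "info set" where "ann_infosets = UNIV"
definition bob_infosets :: "info set" where "bob_infosets = range Hist"

fun reaches :: "info \<Rightarrow> (nat \<times> 'a) \<times> (nat \<Rightarrow> 'b) \<Rightarrow> bool" where
  "reaches Root p = True"
| "reaches (Hist n) p = (fst (fst p) = n)"

text \<open>Strategy s_i reaches h iff some profile (s_i, s_-i) reaches h.  Spelled out:
 Ann's (m,a) reaches the root and history m; every Bob strategy reaches every history
 (Bob does not move at the root).\<close>
definition ann_reaches :: "info \<Rightarrow> nat \<times> 'a \<Rightarrow> bool" where
  "ann_reaches h sa = (case h of Root \<Rightarrow> True | Hist n \<Rightarrow> fst sa = n)"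

definition bob_reaches :: "info \<Rightarrow> (nat \<Rightarrow> 'b) \<Rightarrow> bool" where
  "bob_reaches h sb = (case h of Root \<Rightarrow> False | Hist n \<Rightarrow> True)"

text \<open>R_a(h) and R_b(h): the components of R^i(h), the profiles of R reaching h.\<close>
definition restrA :: "('a,'b) restr \<Rightarrow> info \<Rightarrow> (nat \<times> 'a) set" where
  "restrA R h = {sa \<in> fst R. \<exists>sb \<in> snd R. reaches h (sa, sb)}"

definition restrB :: "('a,'b) restr \<Rightarrow> info \<Rightarrow> (nat \<Rightarrow> 'b) set" where
  "restrB R h = {sb \<in> snd R. \<exists>sa \<in> fst R. reaches h (sa, sb)}"

definition outcome :: "nat \<times> 'a \<Rightarrow> (nat \<Rightarrow> 'b) \<Rightarrow> (nat \<times> 'a) \<times> 'b" where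
  "outcome sa sb = (sa, sb (fst sa))"

definition uA :: "real \<Rightarrow> ('a \<Rightarrow> 'b \<Rightarrow> real) \<Rightarrow> (nat \<times> 'a) \<times> 'b \<Rightarrow> real" where
  "uA eps va z = va (snd (fst z)) (snd z) - eps * real (fst (fst z))"

definition uB :: "('a \<Rightarrow> 'b \<Rightarrow> real) \<Rightarrow> (nat \<times> 'a) \<times> 'b \<Rightarrow> real" where
  "uB vb z = vb (snd (fst z)) (snd z)"

definition weakly_dominated :: "('s \<Rightarrow> 'o \<Rightarrow> real) \<Rightarrow> 's set \<Rightarrow> 'o set \<Rightarrow> 's \<Rightarrow> 's \<Rightarrow> bool" where
  "weakly_dominated u Pi Po s t \<longleftrightarrow> s \<in> Pi \<and> t \<in> Pi \<and>
     (\<forall>y\<in>Po. u s y \<le> u t y) \<and> (\<exists>y\<in>Po. u s y < u t y)"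

definition B_dominated :: "('s \<Rightarrow> 'o \<Rightarrow> real) \<Rightarrow> 's set \<Rightarrow> 'o set \<Rightarrow> 's \<Rightarrow> bool" where
  "B_dominated u Pi Po s \<longleftrightarrow>
     (\<forall>Q. Q \<subseteq> Po \<and> Q \<noteq> {} \<longrightarrow> (\<exists>t\<in>Pi. weakly_dominated u Pi Q s t))"

definition payA :: "real \<Rightarrow> ('a \<Rightarrow> 'b \<Rightarrow> real) \<Rightarrow> nat \<times> 'a \<Rightarrow> (nat \<Rightarrow> 'b) \<Rightarrow> real" where
  "payA eps va sa sb = uA eps va (outcome sa sb)"

definition payB :: "('a \<Rightarrow> 'b \<Rightarrow> real) \<Rightarrow> (nat \<Rightarrow> 'b) \<Rightarrow> nat \<times> 'a \<Rightarrow> real" where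
  "payB vb sb sa = uB vb (outcome sa sb)"

definition condB_domA :: "real \<Rightarrow> ('a \<Rightarrow> 'b \<Rightarrow> real) \<Rightarrow> ('a,'b) restr \<Rightarrow> nat \<times> 'a \<Rightarrow> bool" where
  "condB_domA eps va R sa \<longleftrightarrow> (\<exists>h\<in>ann_infosets. ann_reaches h sa \<and>
      restrA R h \<times> restrB R h \<noteq> {} \<and>
      B_dominated (payA eps va) (restrA R h) (restrB R h) sa)"

definition condB_domB :: "('a \<Rightarrow> 'b \<Rightarrow> real) \<Rightarrow> ('a,'b) restr \<Rightarrow> (nat \<Rightarrow> 'b) \<Rightarrow> bool" where
  "condB_domB vb R sb \<longleftrightarrow> (\<exists>h\<in>bob_infosets. bob_reaches h sb \<and>
      restrB R h \<times> restrA R h \<noteq> {} \<and>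
      B_dominated (payB vb) (restrB R h) (restrA R h) sb)"

definition Uop :: "real \<Rightarrow> ('a \<Rightarrow> 'b \<Rightarrow> real) \<Rightarrow> ('a \<Rightarrow> 'b \<Rightarrow> real) \<Rightarrow> ('a,'b) restr \<Rightarrow> ('a,'b) restr" where
  "Uop eps va vb R = ({sa \<in> fst R. \<not> condB_domA eps va R sa}, {sb \<in> snd R. \<not> condB_domB vb R sb})"

definition Uiter :: "real \<Rightarrow> ('a \<Rightarrow> 'b \<Rightarrow> real) \<Rightarrow> ('a \<Rightarrow> 'b \<Rightarrow> real) \<Rightarrow> nat \<Rightarrow> ('a,'b) restr" where
  "Uiter eps va vb n = (Uop eps va vb ^^ n) (UNIV, UNIV)"

text \<open>U^\<infinity>(S) = \<Inter>_l U^l(S); intersection of products is the product of intersections.\<close>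
definition Uinf :: "real \<Rightarrow> ('a \<Rightarrow> 'b \<Rightarrow> real) \<Rightarrow> ('a \<Rightarrow> 'b \<Rightarrow> real) \<Rightarrow> ('a,'b) restr" where
  "Uinf eps va vb = ((\<Inter>l. fst (Uiter eps va vb l)), (\<Inter>l. snd (Uiter eps va vb l)))"

definition outcomes :: "('a,'b) restr \<Rightarrow> ((nat \<times> 'a) \<times> 'b) set" where
  "outcomes R = {outcome sa sb | sa sb. sa \<in> fst R \<and> sb \<in> snd R}"

end

theory Submission
  imports Defs
begin

definition ProdS :: "(nat \<Rightarrow> 'b set) \<Rightarrow> (nat \<Rightarrow> 'b) set" where
  "ProdS Bs = {sb. \<forall>n. sb n \<in> Bs n}"

definition bdom :: "('a \<Rightarrow> 'b \<Rightarrow> real) \<Rightarrow> (nat \<times> 'a) set \<Rightarrow> (nat \<Rightarrow> 'b set) \<Rightarrow> nat \<Rightarrow> 'b \<Rightarrow> bool" where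
  "bdom vb F Bs n b \<longleftrightarrow> (\<exists>a. (n,a) \<in> F) \<and>
     (\<forall>Q. Q \<subseteq> {sa\<in>F. fst sa = n} \<and> Q \<noteq> {} \<longrightarrow>
        (\<exists>b'\<in>Bs n. (\<forall>y\<in>Q. vb (snd y) b \<le> vb (snd y) b') \<and> (\<exists>y\<in>Q. vb (snd y) b < vb (snd y) b')))"

lemma restr_simps:
  "restrA (F,P) Root = (if P = {} then {} else F)"
  "restrB (F,P) Root = (if F = {} then {} else P)"
  "restrA (F,P) (Hist n) = (if P = {} then {} else {sa\<in>F. fst sa = n})"
  "restrB (F,P) (Hist n) = (if (\<exists>sa\<in>F. fst sa = n) then P else {})"
  by (auto simp: restrA_def restrB_def)

lemma payA_simp: "payA eps va (n,a) sb = va a (sb n) - eps * real n"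
  by (simp add: payA_def uA_def outcome_def)

lemma payB_simp: "payB vb sb y = vb (snd y) (sb (fst y))"
  by (simp add: payB_def uB_def outcome_def)

lemma ProdS_ne: assumes "\<forall>n. Bs n \<noteq> {}" shows "(\<lambda>k. SOME b. b \<in> Bs k) \<in> ProdS Bs"
  using assms unfolding ProdS_def by (simp add: some_in_eq)

lemma proj_ProdS: assumes "\<forall>n. Bs n \<noteq> {}" shows "(\<lambda>sb. sb n) ` ProdS Bs = Bs n"
proof
  show "(\<lambda>sb. sb n) ` ProdS Bs \<subseteq> Bs n" by (auto simp: ProdS_def)
  show "Bs n \<subseteq> (\<lambda>sb. sb n) ` ProdS Bs"
  proof
    fix b assume b: "b \<in> Bs n"
    let ?c = "(\<lambda>k. SOME b. b \<in> Bs k)"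
    have "?c(n := b) \<in> ProdS Bs" using ProdS_ne[OF assms] b by (auto simp: ProdS_def)
    then show "b \<in> (\<lambda>sb. sb n) ` ProdS Bs" by (metis (mono_tags, lifting) fun_upd_same image_eqI)
  qed
qed

lemma A_elim:
  assumes sF: "s \<in> F" and tF: "t \<in> F" and Pne: "P \<noteq> {}"
    and lt: "\<forall>sb\<in>P. payA eps va s sb < payA eps va t sb"
  shows "condB_domA eps va (F,P) s"
proof -
  have F: "F \<noteq> {}" using sF by auto
  have rA: "restrA (F,P) Root = F" using Pne by (simp add: restr_simps)
  have rB: "restrB (F,P) Root = P" using F by (simp add: restr_simps)
  have Bd: "B_dominated (payA eps va) F P s"
    unfolding B_dominated_def
  proof (intro allI impI)
    fix Q assume Q: "Q \<subseteq> P \<and> Q \<noteq> {}"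
    have "weakly_dominated (payA eps va) F Q s t"
      unfolding weakly_dominated_def
    proof (intro conjI)
      show "\<forall>y\<in>Q. payA eps va s y \<le> payA eps va t y" using Q lt by (meson less_imp_le subsetD)
      show "\<exists>y\<in>Q. payA eps va s y < payA eps va t y" using Q lt by blast
    qed (use sF tF in auto)
    then show "\<exists>t\<in>F. weakly_dominated (payA eps va) F Q s t" using tF by blast
  qed
  have ne: "restrA (F,P) Root \<times> restrB (F,P) Root \<noteq> {}" using rA rB F Pne by auto
  show ?thesis unfolding condB_domA_def ann_infosets_def
    using Bd ne rA rB by (intro bexI[of _ Root]) (auto simp: ann_reaches_def)
qed

lemma A_surv:
  fixes va :: "'a \<Rightarrow> 'b \<Rightarrow> real"
  assumes P: "P = ProdS Bs" and ne: "\<forall>k. Bs k \<noteq> {}" and abn: "ab \<in> Bs n" and inF: "(n,aa) \<in> F"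
    and vamax: "\<forall>x y. (x,y) \<noteq> (aa,ab) \<longrightarrow> va x y < va aa ab"
    and H: "\<not>(\<exists>t\<in>F. fst t \<noteq> n \<and> (\<forall>sb\<in>P. va aa ab - eps * real n \<le> payA eps va t sb)
               \<and> (\<exists>sb\<in>P. va aa ab - eps * real n < payA eps va t sb))"
  shows "\<not> condB_domA eps va (F,P) (n,aa)"
proof
  assume "condB_domA eps va (F,P) (n,aa)"
  then obtain h where reach: "ann_reaches h (n,aa)"
    and Bd: "B_dominated (payA eps va) (restrA (F,P) h) (restrB (F,P) h) (n,aa)"
    by (auto simp: condB_domA_def)
  let ?c = "(\<lambda>k. SOME b. b \<in> Bs k)"
  have cP: "?c \<in> P" using ProdS_ne[OF ne] P by simp
  have rB: "restrB (F,P) h = P"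
    using reach inF by (cases h) (auto simp: restr_simps ann_reaches_def)
  have rA: "restrA (F,P) h \<subseteq> F"
    by (cases h) (auto simp: restr_simps)
  define Q where "Q = {sb\<in>P. sb n = ab}"
  have cQ: "?c(n := ab) \<in> Q" using cP abn unfolding Q_def P by (auto simp: ProdS_def)
  hence Qne: "Q \<noteq> {}" by auto
  have QP: "Q \<subseteq> P" by (auto simp: Q_def)
  from Bd Qne QP rB have "\<exists>t\<in>restrA (F,P) h. weakly_dominated (payA eps va) (restrA (F,P) h) Q (n,aa) t"
    unfolding B_dominated_def by simp
  then obtain t where tA: "t \<in> restrA (F,P) h"
    and wd: "weakly_dominated (payA eps va) (restrA (F,P) h) Q (n,aa) t" by blast
  obtain n' a' where t: "t = (n',a')" by (cases t)
  have tF: "t \<in> F" using tA rA by auto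
  have pay_na: "\<And>y. y \<in> Q \<Longrightarrow> payA eps va (n,aa) y = va aa ab - eps * real n"
    by (auto simp: Q_def payA_simp)
  from wd have le: "\<forall>y\<in>Q. va aa ab - eps * real n \<le> payA eps va t y"
    and lt: "\<exists>y\<in>Q. va aa ab - eps * real n < payA eps va t y"
    unfolding weakly_dominated_def using pay_na by auto
  show False
  proof (cases "n' = n")
    case True
    from lt obtain y where y: "y \<in> Q" "va aa ab - eps * real n < payA eps va t y" by auto
    have "payA eps va t y = va a' ab - eps * real n" using y True t by (auto simp: Q_def payA_simp)
    moreover have "va a' ab \<le> va aa ab" using vamax by (cases "a' = aa") (auto intro: less_imp_le)
    ultimately show False using y by auto
  next
    case False
    have "\<forall>sb\<in>P. va aa ab - eps * real n \<le> payA eps va t sb"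
    proof
      fix sb assume sb: "sb \<in> P"
      have "sb(n := ab) \<in> Q" using sb abn unfolding Q_def P by (auto simp: ProdS_def)
      hence "va aa ab - eps * real n \<le> payA eps va t (sb(n := ab))" using le by auto
      also have "payA eps va t (sb(n := ab)) = payA eps va t sb" using False t by (simp add: payA_simp)
      finally show "va aa ab - eps * real n \<le> payA eps va t sb" .
    qed
    moreover have "\<exists>sb\<in>P. va aa ab - eps * real n < payA eps va t sb" using lt QP by auto
    ultimately show False using H tF False t by auto
  qed
qed

lemma condB_domB_char:
  assumes P: "P = ProdS Bs" and ne: "\<forall>n. Bs n \<noteq> {}" and sb: "sb \<in> P"
  shows "condB_domB vb (F,P) sb \<longleftrightarrow> (\<exists>n. bdom vb F Bs n (sb n))"
proof
  have Pne: "P \<noteq> {}" using ProdS_ne[OF ne] P by auto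
  assume "condB_domB vb (F,P) sb"
  then obtain n where ne2: "restrB (F,P) (Hist n) \<times> restrA (F,P) (Hist n) \<noteq> {}"
    and Bd: "B_dominated (payB vb) (restrB (F,P) (Hist n)) (restrA (F,P) (Hist n)) sb"
    by (auto simp: condB_domB_def bob_infosets_def)
  from ne2 have ex: "\<exists>sa\<in>F. fst sa = n" by (auto simp: restr_simps split: if_splits)
  hence rB: "restrB (F,P) (Hist n) = P" by (simp add: restr_simps)
  have rA: "restrA (F,P) (Hist n) = {sa\<in>F. fst sa = n}" using Pne by (simp add: restr_simps)
  have "bdom vb F Bs n (sb n)" unfolding bdom_def
  proof (intro conjI allI impI)
    show "\<exists>a. (n, a) \<in> F" using ex by force
    fix Q assume Q: "Q \<subseteq> {sa \<in> F. fst sa = n} \<and> Q \<noteq> {}"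
    with Bd rA rB have "\<exists>t\<in>P. weakly_dominated (payB vb) P Q sb t"
      unfolding B_dominated_def by simp
    then obtain t where tP: "t \<in> P" and wd: "weakly_dominated (payB vb) P Q sb t" by blast
    have fy: "\<And>y. y \<in> Q \<Longrightarrow> fst y = n" using Q by auto
    have "t n \<in> Bs n" using tP P by (auto simp: ProdS_def)
    moreover have "\<forall>y\<in>Q. vb (snd y) (sb n) \<le> vb (snd y) (t n)"
      using wd fy unfolding weakly_dominated_def by (auto simp: payB_simp)
    moreover have "\<exists>y\<in>Q. vb (snd y) (sb n) < vb (snd y) (t n)"
      using wd fy unfolding weakly_dominated_def by (force simp: payB_simp)
    ultimately show "\<exists>b'\<in>Bs n. (\<forall>y\<in>Q. vb (snd y) (sb n) \<le> vb (snd y) b') \<and>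
        (\<exists>y\<in>Q. vb (snd y) (sb n) < vb (snd y) b')" by blast
  qed
  then show "\<exists>n. bdom vb F Bs n (sb n)" by blast
next
  have Pne: "P \<noteq> {}" using ProdS_ne[OF ne] P by auto
  assume "\<exists>n. bdom vb F Bs n (sb n)"
  then obtain n where bd: "bdom vb F Bs n (sb n)" by blast
  then obtain a where a: "(n,a) \<in> F" by (auto simp: bdom_def)
  hence rB: "restrB (F,P) (Hist n) = P" by (force simp: restr_simps)
  have rA: "restrA (F,P) (Hist n) = {sa\<in>F. fst sa = n}" using Pne by (simp add: restr_simps)
  have "B_dominated (payB vb) P {sa\<in>F. fst sa = n} sb"
    unfolding B_dominated_def
  proof (intro allI impI)
    fix Q assume Q: "Q \<subseteq> {sa \<in> F. fst sa = n} \<and> Q \<noteq> {}"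
    with bd obtain b' where b': "b' \<in> Bs n" and le: "\<forall>y\<in>Q. vb (snd y) (sb n) \<le> vb (snd y) b'"
      and lt: "\<exists>y\<in>Q. vb (snd y) (sb n) < vb (snd y) b'"
      unfolding bdom_def by blast
    have fy: "\<And>y. y \<in> Q \<Longrightarrow> fst y = n" using Q by auto
    have tP: "sb(n := b') \<in> P" using sb b' P by (auto simp: ProdS_def)
    have "weakly_dominated (payB vb) P Q sb (sb(n := b'))"
      unfolding weakly_dominated_def using sb tP le lt fy by (auto simp: payB_simp)
    then show "\<exists>t\<in>P. weakly_dominated (payB vb) P Q sb t" using tP by blast
  qed
  moreover have "restrB (F,P) (Hist n) \<times> restrA (F,P) (Hist n) \<noteq> {}"
    using rA rB Pne a by auto
  ultimately show "condB_domB vb (F,P) sb"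
    unfolding condB_domB_def bob_infosets_def bob_reaches_def using rA rB
    by (intro bexI[of _ "Hist n"]) auto
qed

lemma snd_Uop:
  assumes ne: "\<forall>n. Bs n \<noteq> {}"
  shows "snd (Uop eps va vb (F, ProdS Bs)) = ProdS (\<lambda>n. {b\<in>Bs n. \<not> bdom vb F Bs n b})"
proof -
  have "\<And>sb. sb \<in> ProdS Bs \<Longrightarrow> condB_domB vb (F, ProdS Bs) sb \<longleftrightarrow> (\<exists>n. bdom vb F Bs n (sb n))"
    using condB_domB_char[OF refl ne] by blast
  then show ?thesis by (auto simp: Uop_def ProdS_def)
qed

lemma bdom_ne:
  fixes Bs :: "nat \<Rightarrow> 'b::finite set"
  assumes "Bs n \<noteq> {}"
  shows "{b\<in>Bs n. \<not> bdom vb F Bs n b} \<noteq> {}"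
proof (cases "\<exists>a. (n,a) \<in> F")
  case False
  then show ?thesis using assms by (auto simp: bdom_def)
next
  case True
  then obtain a where a: "(n,a) \<in> F" by blast
  have fin: "finite (vb a ` Bs n)" by simp
  have "Max (vb a ` Bs n) \<in> vb a ` Bs n" using Max_in[OF fin] assms by auto
  then obtain b where b: "b \<in> Bs n" "vb a b = Max (vb a ` Bs n)" by force
  have "\<not> bdom vb F Bs n b"
  proof
    assume "bdom vb F Bs n b"
    then obtain b' where "b' \<in> Bs n" "vb a b < vb a b'"
      unfolding bdom_def using a by (auto dest!: spec[of _ "{(n,a)}"])
    moreover have "vb a b' \<le> vb a b" using b \<open>b' \<in> Bs n\<close> fin by simp
    ultimately show False by simp
  qed
  then show ?thesis using b by auto
qed

lemma ab_surv:
  assumes "(n,aa) \<in> F" "\<forall>y. y \<noteq> ab \<longrightarrow> vb aa y < vb aa ab"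
  shows "\<not> bdom vb F Bs n ab"
proof
  assume "bdom vb F Bs n ab"
  then obtain b' where "vb aa ab < vb aa b'"
    unfolding bdom_def using assms(1) by (auto dest!: spec[of _ "{(n,aa)}"])
  then show False using assms(2) by (cases "b' = ab") force+
qed

lemma collapse:
  assumes "\<forall>a. (n,a) \<in> F \<longrightarrow> a = aa" "(n,aa) \<in> F" "\<forall>y. y \<noteq> ab \<longrightarrow> vb aa y < vb aa ab"
    "ab \<in> Bs n" "b \<noteq> ab"
  shows "bdom vb F Bs n b"
  unfolding bdom_def
proof (intro conjI allI impI)
  show "\<exists>a. (n, a) \<in> F" using assms by blast
  fix Q assume Q: "Q \<subseteq> {sa \<in> F. fst sa = n} \<and> Q \<noteq> {}"
  have "Q = {(n,aa)}" using Q assms(1) by force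
  then show "\<exists>b'\<in>Bs n. (\<forall>y\<in>Q. vb (snd y) b \<le> vb (snd y) b') \<and> (\<exists>y\<in>Q. vb (snd y) b < vb (snd y) b')"
    using assms(3-5) by (auto intro!: bexI[of _ ab] less_imp_le)
qed

lemma dec_inter:
  fixes X :: "nat \<Rightarrow> 'b::finite set"
  assumes dec: "\<forall>k. X (Suc k) \<subseteq> X k" and ne: "\<forall>k. X k \<noteq> {}"
  shows "\<exists>b. \<forall>k. b \<in> X k"
proof (rule ccontr)
  assume "\<not> ?thesis"
  then have "\<forall>b. \<exists>k. b \<notin> X k" by blast
  then obtain f where f: "\<forall>b. b \<notin> X (f b)" by metis
  define K where "K = Max (range f)"
  obtain b where b: "b \<in> X K" using ne by blast
  have "f b \<le> K" unfolding K_def by simp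
  hence "X K \<subseteq> X (f b)" using lift_Suc_antimono_le[of X] dec by blast
  then show False using b f by blast
qed

lemma Uiter_Suc: "Uiter eps va vb (Suc k) = Uop eps va vb (Uiter eps va vb k)"
  by (simp add: Uiter_def)

lemma Uiter_0: "Uiter eps va vb 0 = (UNIV, UNIV)"
  by (simp add: Uiter_def)

locale mb =
  fixes va vb :: "'a::finite \<Rightarrow> 'b::finite \<Rightarrow> real" and aa :: 'a and ab :: 'b and eps m :: real
  assumes va_max: "\<forall>x y. (x, y) \<noteq> (aa, ab) \<longrightarrow> va x y < va aa ab"
    and vb_max: "\<forall>y. y \<noteq> ab \<longrightarrow> vb aa y < vb aa ab"
    and m_bound: "\<forall>x y. (x, y) \<noteq> (aa, ab) \<longrightarrow> va x y \<le> m"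
    and eps_pos: "0 < eps" and eps_small: "eps < va aa ab - m"
begin

abbreviation "FF k \<equiv> fst (Uiter eps va vb k)"
abbreviation "PP k \<equiv> snd (Uiter eps va vb k)"
abbreviation "proj k n \<equiv> (\<lambda>sb. sb n) ` PP k"

definition Inv :: "nat \<Rightarrow> bool" where
  "Inv k \<longleftrightarrow> PP k = ProdS (proj k) \<and> (\<forall>n. proj k n \<noteq> {}) \<and> ab \<in> proj k 0 \<and> (0,aa) \<in> FF k"

lemma va_le: "va x y \<le> va aa ab"
  using va_max by (cases "(x,y) = (aa,ab)") (auto intro: less_imp_le)

lemma FF_Suc: "FF (Suc k) = {sa \<in> FF k. \<not> condB_domA eps va (FF k, PP k) sa}"
  by (simp add: Uiter_Suc Uop_def)

lemma PP_step:
  assumes "PP k = ProdS Bs" "\<forall>n. Bs n \<noteq> {}"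
  shows "PP (Suc k) = ProdS (\<lambda>n. {b\<in>Bs n. \<not> bdom vb (FF k) Bs n b})"
proof -
  have "Uiter eps va vb k = (FF k, ProdS Bs)" using assms(1) by (metis prod.collapse)
  then have "Uop eps va vb (Uiter eps va vb k) = Uop eps va vb (FF k, ProdS Bs)" by (rule arg_cong)
  then show ?thesis by (simp add: Uiter_Suc snd_Uop[OF assms(2)])
qed

lemma PP_dec: "PP (Suc k) \<subseteq> PP k"
  by (auto simp: Uiter_Suc Uop_def)

lemma FF_dec: "FF (Suc k) \<subseteq> FF k"
  by (auto simp: Uiter_Suc Uop_def)

lemma Inv_all: "Inv k"
proof (induction k)
  case 0
  have pr0: "proj 0 n = UNIV" for n
  proof -
    have "b \<in> proj 0 n" for b by (rule image_eqI[of _ _ "\<lambda>_. b"]) (auto simp: Uiter_0)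
    then show ?thesis by blast
  qed
  have "PP 0 = ProdS (proj 0)" unfolding pr0 by (simp add: Uiter_0 ProdS_def)
  moreover have "(0,aa) \<in> FF 0" by (simp add: Uiter_0)
  ultimately show ?case unfolding Inv_def using pr0 by simp
next
  case (Suc k)
  let ?Bs = "proj k"
  let ?Bs' = "\<lambda>n. {b\<in>?Bs n. \<not> bdom vb (FF k) ?Bs n b}"
  have P: "PP k = ProdS ?Bs" and ne: "\<forall>n. ?Bs n \<noteq> {}" and ab0: "ab \<in> ?Bs 0"
    and aa0: "(0,aa) \<in> FF k" using Suc by (auto simp: Inv_def)
  have P': "PP (Suc k) = ProdS ?Bs'" using PP_step[OF P ne] .
  have ne': "\<forall>n. ?Bs' n \<noteq> {}"
  proof
    fix n show "?Bs' n \<noteq> {}" using bdom_ne[of "?Bs" n vb "FF k"] ne by blast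
  qed
  have pr: "proj (Suc k) n = ?Bs' n" for n using proj_ProdS[OF ne'] P' by simp
  have "ab \<in> ?Bs' 0" using ab0 ab_surv[where vb=vb and aa=aa and ab=ab and Bs="proj k" and n=0 and F="FF k", OF aa0 vb_max] by simp
  moreover have "(0,aa) \<in> FF (Suc k)"
  proof -
    have "\<not> condB_domA eps va (FF k, PP k) (0,aa)"
    proof (rule A_surv[OF P ne ab0 aa0 va_max])
      show "\<not>(\<exists>t\<in>FF k. fst t \<noteq> 0 \<and> (\<forall>sb\<in>PP k. va aa ab - eps * real 0 \<le> payA eps va t sb)
               \<and> (\<exists>sb\<in>PP k. va aa ab - eps * real 0 < payA eps va t sb))"
      proof
        assume "\<exists>t\<in>FF k. fst t \<noteq> 0 \<and> (\<forall>sb\<in>PP k. va aa ab - eps * real 0 \<le> payA eps va t sb)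
               \<and> (\<exists>sb\<in>PP k. va aa ab - eps * real 0 < payA eps va t sb)"
        then obtain t sb where "va aa ab - eps * real 0 < payA eps va t sb" by blast
        moreover obtain n' a' where "t = (n',a')" by (cases t)
        ultimately have "va aa ab < va a' (sb n') - eps * real n'" by (simp add: payA_simp)
        moreover have "va a' (sb n') \<le> va aa ab" by (rule va_le)
        moreover have "0 \<le> eps * real n'" using eps_pos by simp
        ultimately show False by linarith
      qed
    qed
    then show ?thesis using aa0 by (simp add: FF_Suc)
  qed
  ultimately show ?case unfolding Inv_def
  proof (intro conjI)
    show "PP (Suc k) = ProdS (proj (Suc k))" by (simp only: pr) (rule P')
    show "\<forall>n. proj (Suc k) n \<noteq> {}" by (simp only: pr) (rule ne')
    show "ab \<in> proj (Suc k) 0" by (simp only: pr) fact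
  qed
qed

definition Guar :: "nat \<Rightarrow> real \<Rightarrow> bool" where
  "Guar k c \<longleftrightarrow> (\<exists>t\<in>FF k. \<forall>sb\<in>PP k. c \<le> payA eps va t sb)"

lemma PP_ne: "PP k \<noteq> {}"
  using Inv_all[of k] ProdS_ne[of "proj k"] by (auto simp: Inv_def)

lemma coll:
  assumes "\<forall>a. (n,a) \<in> FF j \<longrightarrow> a = aa" "(n,aa) \<in> FF j" "ab \<in> proj j n" "sb \<in> PP (Suc j)"
  shows "sb n = ab"
proof (rule ccontr)
  assume nab: "sb n \<noteq> ab"
  have P: "PP j = ProdS (proj j)" and ne: "\<forall>n. proj j n \<noteq> {}" using Inv_all[of j] by (auto simp: Inv_def)
  have "sb n \<in> {b\<in>proj j n. \<not> bdom vb (FF j) (proj j) n b}"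
    using assms(4) PP_step[OF P ne] by (auto simp: ProdS_def)
  moreover have "bdom vb (FF j) (proj j) n (sb n)"
    using collapse[where Bs="proj j" and n=n and F="FF j" and vb=vb and aa=aa and ab=ab and b="sb n", OF assms(1,2) vb_max assms(3) nab] .
  ultimately show False by simp
qed

lemma Guar_M: "\<exists>k. Guar k (va aa ab)"
proof (rule ccontr)
  assume nG: "\<not> ?thesis"
  define M where "M = va aa ab"
  define ok where "ok n \<longleftrightarrow> (\<exists>k c. Guar k c \<and> m - eps * real n < c)" for n
  define L where "L = Min (range (\<lambda>p. va (fst p) (snd p)))"
  have L: "L \<le> va x y" for x y
  proof -
    have fin: "finite (range (\<lambda>p. va (fst p) (snd p)))" by simp
    have "va x y \<in> range (\<lambda>p. va (fst p) (snd p))" using rangeI[of "\<lambda>p. va (fst p) (snd p)" "(x,y)"] by simp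
    then show ?thesis unfolding L_def by (rule Min_le[OF fin])
  qed
  have GL: "Guar 0 L" unfolding Guar_def
  proof (rule bexI[of _ "(0,aa)"])
    show "(0,aa) \<in> FF 0" by (simp add: Uiter_0)
    show "\<forall>sb\<in>PP 0. L \<le> payA eps va (0, aa) sb" using L by (simp add: payA_simp)
  qed
  obtain n where "m - L < real n * eps" using reals_Archimedean3[OF eps_pos] by blast
  then have "m - eps * real n < L" by (simp add: mult.commute)
  then have "ok n" unfolding ok_def using GL by blast
  define n1 where "n1 = (LEAST n. ok n)"
  have okn1: "ok n1" unfolding n1_def by (rule LeastI) fact
  then obtain k0 c where Gk0: "Guar k0 c" and c: "m - eps * real n1 < c" by (auto simp: ok_def)
  have notG: "\<not> Guar k (M - eps * real n1)" for k
  proof (cases n1)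
    case 0
    then show ?thesis using nG M_def by auto
  next
    case (Suc p)
    have "\<not> ok p" unfolding n1_def using not_less_Least[of p ok] Suc n1_def by simp
    moreover have "m - eps * real p < M - eps * real n1" using Suc eps_small M_def by (simp add: algebra_simps)
    ultimately show ?thesis unfolding ok_def by blast
  qed
  have alive: "(n1,aa) \<in> FF k \<and> ab \<in> proj k n1" for k
  proof (induction k)
    case 0
    have "ab \<in> proj 0 n1" by (rule image_eqI[of _ _ "\<lambda>_. ab"]) (auto simp: Uiter_0)
    then show ?case by (simp add: Uiter_0)
  next
    case (Suc k)
    have P: "PP k = ProdS (proj k)" and ne: "\<forall>n. proj k n \<noteq> {}" using Inv_all[of k] by (auto simp: Inv_def)
    have inF: "(n1,aa) \<in> FF k" and abn: "ab \<in> proj k n1" using Suc by auto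
    let ?Bs' = "\<lambda>n. {b\<in>proj k n. \<not> bdom vb (FF k) (proj k) n b}"
    have P': "PP (Suc k) = ProdS ?Bs'" using PP_step[OF P ne] .
    have ne': "\<forall>n. ?Bs' n \<noteq> {}"
    proof
      fix n show "?Bs' n \<noteq> {}" using bdom_ne[of "proj k" n vb "FF k"] ne by blast
    qed
    have "ab \<in> ?Bs' n1" using abn ab_surv[where vb=vb and aa=aa and ab=ab and Bs="proj k" and n=n1 and F="FF k", OF inF vb_max] by simp
    hence ab': "ab \<in> proj (Suc k) n1" using proj_ProdS[OF ne'] P' by simp
    have "\<not> condB_domA eps va (FF k, PP k) (n1,aa)"
    proof (rule A_surv[OF P ne abn inF va_max], rule notI)
      assume "\<exists>t\<in>FF k. fst t \<noteq> n1 \<and> (\<forall>sb\<in>PP k. va aa ab - eps * real n1 \<le> payA eps va t sb)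
               \<and> (\<exists>sb\<in>PP k. va aa ab - eps * real n1 < payA eps va t sb)"
      then have "Guar k (M - eps * real n1)" unfolding Guar_def M_def by blast
      then show False using notG by blast
    qed
    then show ?case using inF ab' by (simp add: FF_Suc)
  qed
  have only: "\<forall>a. (n1,a) \<in> FF (Suc k0) \<longrightarrow> a = aa"
  proof (intro allI impI)
    fix a assume a1: "(n1,a) \<in> FF (Suc k0)"
    show "a = aa"
    proof (rule ccontr)
      assume na: "a \<noteq> aa"
      from Gk0 obtain t where tF: "t \<in> FF k0" and tg: "\<forall>sb\<in>PP k0. c \<le> payA eps va t sb"
        unfolding Guar_def by blast
      have aF: "(n1,a) \<in> FF k0" using a1 FF_dec by blast
      have "\<forall>sb\<in>PP k0. payA eps va (n1,a) sb < payA eps va t sb"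
      proof
        fix sb assume sb: "sb \<in> PP k0"
        have "va a (sb n1) \<le> m" using m_bound na by auto
        moreover have "payA eps va (n1,a) sb = va a (sb n1) - eps * real n1" by (simp add: payA_simp)
        moreover have "c \<le> payA eps va t sb" using tg sb by blast
        ultimately show "payA eps va (n1,a) sb < payA eps va t sb" using c by linarith
      qed
      then have "condB_domA eps va (FF k0, PP k0) (n1,a)"
        using A_elim[OF aF tF PP_ne] by blast
      then show False using a1 FF_Suc by auto
    qed
  qed
  have "Guar (Suc (Suc k0)) (M - eps * real n1)"
    unfolding Guar_def
  proof (rule bexI[of _ "(n1,aa)"])
    show "(n1,aa) \<in> FF (Suc (Suc k0))" using alive by blast
    show "\<forall>sb\<in>PP (Suc (Suc k0)). M - eps * real n1 \<le> payA eps va (n1, aa) sb"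
    proof
      fix sb assume "sb \<in> PP (Suc (Suc k0))"
      then have "sb n1 = ab" using coll[OF only conjunct1[OF alive[of "Suc k0"]] conjunct2[OF alive[of "Suc k0"]]] by blast
      then show "M - eps * real n1 \<le> payA eps va (n1, aa) sb" by (simp add: payA_simp M_def)
    qed
  qed
  then show False using notG by blast
qed

lemma main: "outcomes (Uinf eps va vb) = {((0, aa), ab)}"
proof -
  obtain k where "Guar k (va aa ab)" using Guar_M by blast
  then obtain t where tF: "t \<in> FF k" and tg: "\<forall>sb\<in>PP k. va aa ab \<le> payA eps va t sb"
    unfolding Guar_def by blast
  have F1: "FF (Suc k) \<subseteq> {(0,aa)}"
  proof
    fix s assume s1: "s \<in> FF (Suc k)"
    obtain n a where s: "s = (n,a)" by (cases s)
    show "s \<in> {(0,aa)}"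
    proof (rule ccontr)
      assume ns: "s \<notin> {(0,aa)}"
      have sF: "s \<in> FF k" using s1 FF_dec by blast
      have "\<forall>sb\<in>PP k. payA eps va s sb < payA eps va t sb"
      proof
        fix sb assume sb: "sb \<in> PP k"
        have "va a (sb n) - eps * real n < va aa ab"
        proof (cases "n = 0")
          case True
          then have "a \<noteq> aa" using ns s by auto
          then show ?thesis using va_max True by auto
        next
          case False
          then have "0 < eps * real n" using eps_pos by simp
          then show ?thesis using va_le[of a "sb n"] by linarith
        qed
        then show "payA eps va s sb < payA eps va t sb" using tg sb s by (auto simp: payA_simp)
      qed
      then have "condB_domA eps va (FF k, PP k) s" using A_elim[OF sF tF PP_ne] by blast
      then show False using s1 FF_Suc by auto
    qed
  qed
  have aaF: "(0,aa) \<in> FF j" for j using Inv_all[of j] by (auto simp: Inv_def)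
  have P2: "sb \<in> PP (Suc (Suc k)) \<Longrightarrow> sb 0 = ab" for sb
  proof -
    assume sb: "sb \<in> PP (Suc (Suc k))"
    have "\<forall>a. (0,a) \<in> FF (Suc k) \<longrightarrow> a = aa" using F1 by auto
    moreover have "ab \<in> proj (Suc k) 0" using Inv_all[of "Suc k"] by (auto simp: Inv_def)
    ultimately show "sb 0 = ab" using coll[OF _ aaF[of "Suc k"] _ sb] by blast
  qed
  have "\<exists>b. \<forall>k. b \<in> proj k n" for n
  proof (rule dec_inter)
    show "\<forall>k. proj (Suc k) n \<subseteq> proj k n" using PP_dec by (simp add: image_mono)
    show "\<forall>k. proj k n \<noteq> {}" using Inv_all by (auto simp: Inv_def)
  qed
  then have "\<forall>n. \<exists>b. \<forall>k. b \<in> proj k n" by blast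
  from choice[OF this] obtain g where g: "\<forall>n k. g n \<in> proj k n" by blast
  define sb0 where "sb0 = (\<lambda>n. if n = 0 then ab else g n)"
  have sb0P: "sb0 \<in> PP k'" for k'
  proof -
    have "PP k' = ProdS (proj k')" using Inv_all[of k'] by (auto simp: Inv_def)
    moreover have "ab \<in> proj k' 0" using Inv_all[of k'] by (auto simp: Inv_def)
    ultimately show ?thesis using g by (auto simp: ProdS_def sb0_def)
  qed
  show ?thesis
  proof
    show "outcomes (Uinf eps va vb) \<subseteq> {((0, aa), ab)}"
    proof
      fix z assume "z \<in> outcomes (Uinf eps va vb)"
      then obtain sa sb where z: "z = outcome sa sb" and sa: "\<forall>l. sa \<in> FF l" and sb: "\<forall>l. sb \<in> PP l"
        by (auto simp: outcomes_def Uinf_def)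
      have "sa = (0,aa)" using sa F1 by blast
      moreover have "sb 0 = ab" using sb P2 by blast
      ultimately show "z \<in> {((0, aa), ab)}" using z by (simp add: outcome_def)
    qed
    show "{((0, aa), ab)} \<subseteq> outcomes (Uinf eps va vb)"
    proof -
      have "(0,aa) \<in> fst (Uinf eps va vb)" using aaF by (simp add: Uinf_def)
      moreover have "sb0 \<in> snd (Uinf eps va vb)" using sb0P by (simp add: Uinf_def)
      moreover have "((0,aa),ab) = outcome (0,aa) sb0" by (simp add: outcome_def sb0_def)
      ultimately show ?thesis unfolding outcomes_def by blast
    qed
  qed
qed

end

theorem proposition10:
  fixes va vb :: "'a::finite \<Rightarrow> 'b::finite \<Rightarrow> real"
    and aa :: 'a and ab :: 'b
  assumes "\<forall>x y. (x, y) \<noteq> (aa, ab) \<longrightarrow> va x y < va aa ab"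
    and "\<forall>y. y \<noteq> ab \<longrightarrow> vb aa y < vb aa ab"
  shows "\<exists>\<delta>>0. \<forall>eps. 0 < eps \<and> eps < \<delta> \<longrightarrow>
           outcomes (Uinf eps va vb) = {((0, aa), ab)}"
proof -
  define V where "V = insert (va aa ab - 1) {va x y |x y. (x, y) \<noteq> (aa, ab)}"
  have finV: "finite V"
  proof -
    have "{va x y |x y. (x, y) \<noteq> (aa, ab)} \<subseteq> range (\<lambda>p. va (fst p) (snd p))"
    proof
      fix v assume "v \<in> {va x y |x y. (x, y) \<noteq> (aa, ab)}"
      then obtain x y where "v = va x y" by blast
      then show "v \<in> range (\<lambda>p. va (fst p) (snd p))" using rangeI[of "\<lambda>p. va (fst p) (snd p)" "(x,y)"] by simp
    qed
    moreover have "finite (range (\<lambda>p. va (fst p) (snd p)))" by simp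
    ultimately have "finite {va x y |x y. (x, y) \<noteq> (aa, ab)}" by (rule finite_subset)
    then show ?thesis unfolding V_def by simp
  qed
  define m where "m = Max V"
  have mlt: "m < va aa ab"
  proof -
    have "m \<in> V" unfolding m_def by (rule Max_in[OF finV]) (simp add: V_def)
    then show ?thesis using assms(1) unfolding V_def by auto
  qed
  have mb: "\<forall>x y. (x, y) \<noteq> (aa, ab) \<longrightarrow> va x y \<le> m"
  proof (intro allI impI)
    fix x y assume "(x, y) \<noteq> (aa, ab)"
    then have "va x y \<in> V" unfolding V_def by blast
    then show "va x y \<le> m" unfolding m_def by (rule Max_ge[OF finV])
  qed
  show ?thesis
  proof (intro exI[of _ "va aa ab - m"] conjI allI impI)
    show "0 < va aa ab - m" using mlt by simp
    fix eps :: real assume e: "0 < eps \<and> eps < va aa ab - m"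
    interpret mb va vb aa ab eps m
    proof
      show "\<forall>x y. (x, y) \<noteq> (aa, ab) \<longrightarrow> va x y < va aa ab" by (rule assms(1))
      show "\<forall>y. y \<noteq> ab \<longrightarrow> vb aa y < vb aa ab" by (rule assms(2))
      show "\<forall>x y. (x, y) \<noteq> (aa, ab) \<longrightarrow> va x y \<le> m" by (rule mb)
      show "0 < eps" using e by simp
      show "eps < va aa ab - m" using e by simp
    qed
    show "outcomes (Uinf eps va vb) = {((0, aa), ab)}" by (rule main)
  qed
qed

end
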